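(* The code $\mathcal C_3(\mathbb D_d)$ is the $\mathbb F_3$-linear span of the vectors (functions of $t\in\mathbb F_{3^{2m}}$) \[ \mathrm{Tr}_{2m}(bt)\mathrm{Tr}_{2m}(b't),\quad \mathrm{Tr}_{2m}(bt),\quad \mathrm{Tr}_{2m}(at^{3^m+1})\mathrm{Tr}_{2m}(bt),\quad \mathrm{Tr}_{2m}(at^{3^m+1})\mathrm{Tr}_{2m}(a't^{3^m+1}),\quad \mathrm{Tr}_{2m}(at^{3^m+1}),\quad \mathbf 1, \] where $a,a'$ range over $\mathbb F_{3^m}^*$ and $b,b'$ range over $\mathbb F_{3^{2m}}$, and $\mathbf 1$ is the all-one vector.
   Context: Let $m\ge 2$ be an integer. For $s\in\{m,2m\}$ let $\mathrm{Tr}_s:\mathbb F_{3^s}\to\mathbb F_3$ denote the absolute trace. Vectors in $\mathbb F_3^{3^{2m}}$ are indexed by $\mathbb F_{3^{2m}}$, and a function $f:\mathbb F_{3^{2m}}\to\mathbb F_3$ is identified with $(f(t))_{t\in\mathbb F_{3^{2m}}}$; products are pointwise. Let $\mathcal C(2m,3)=\{(\mathrm{Tr}_{2m}(at^{3^m+1}+bt)+h)_{t\in\mathbb F_{3^{2m}}}: a\in\mathbb F_{3^m}, b\in\mathbb F_{3^{2m}}, h\in\mathbb F_3\}$, let $d$ be its minimum nonzero Hamming weight, let $\mathbb D_d$ be the incidence structure on $\mathbb F_{3^{2m}}$ whose blocks are the supports of the weight-$d$ codewords, and let $\mathcal C_3(\mathbb D_d)$ be the $\mathbb F_3$-span of the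 incidence vectors of the blocks (entry $1$ on the block, $0$ elsewhere). *)

theory Defs
  imports Main
begin

text \<open>The field F_(3^(2m)) is modelled as a finite field type 'a with CARD('a) = 3^(2m).
  F_3 is its prime subfield {x. x^3 = x}, F_(3^m) the subfield {x. x^(3^m) = x}.
  Vectors in F_3^(3^(2m)) indexed by F_(3^(2m)) are functions 'a => 'a with values in F_3.\<close>

definition F3 :: "'a::field set" where
  "F3 = {x. x ^ 3 = x}"

definition subF :: "nat \<Rightarrow> 'a::field set" where
  "subF s = {x. x ^ (3 ^ s) = x}"

definition Tr :: "nat \<Rightarrow> 'a::field \<Rightarrow> 'a" where
  "Tr s x = (\<Sum>i<s. x ^ (3 ^ i))"

definition codeC :: "nat \<Rightarrow> ('a::{field,finite} \<Rightarrow> 'a) set" where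
  "codeC m = {(\<lambda>t. Tr (2*m) (a * t ^ (3^m + 1) + b * t) + h) | a b h.
                a \<in> subF m \<and> h \<in> F3}"

definition hweight :: "('a \<Rightarrow> 'b::zero) \<Rightarrow> nat" where
  "hweight c = card {t. c t \<noteq> 0}"

definition minw :: "('a::{field,finite} \<Rightarrow> 'a) set \<Rightarrow> nat" where
  "minw C = Min {hweight c | c. c \<in> C \<and> c \<noteq> (\<lambda>_. 0)}"

definition blocks :: "('a::{field,finite} \<Rightarrow> 'a) set \<Rightarrow> 'a set set" where
  "blocks C = {{t. c t \<noteq> 0} | c. c \<in> C \<and> c \<noteq> (\<lambda>_. 0) \<and> hweight c = minw C}"

definition incvec :: "'a set \<Rightarrow> ('a \<Rightarrow> 'b::{zero,one})" where
  "incvec B = (\<lambda>t. if t \<in> B then 1 else 0)"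

definition span3 :: "('a \<Rightarrow> 'b::field) set \<Rightarrow> ('a \<Rightarrow> 'b) set" where
  "span3 S = {f. \<exists>(n::nat) (c::nat \<Rightarrow> 'b) (v::nat \<Rightarrow> 'a \<Rightarrow> 'b). (\<forall>i<n. c i \<in> F3 \<and> v i \<in> S) \<and> f = (\<lambda>t. \<Sum>i<n. c i * v i t)}"

definition gens :: "nat \<Rightarrow> ('a::{field,finite} \<Rightarrow> 'a) set" where
  "gens m =
     {(\<lambda>t. Tr (2*m) (b*t) * Tr (2*m) (b'*t)) | b b'. True}
   \<union> {(\<lambda>t. Tr (2*m) (b*t)) | b. True}
   \<union> {(\<lambda>t. Tr (2*m) (a * t^(3^m+1)) * Tr (2*m) (b*t)) | a b. a \<in> subF m - {0}}
   \<union> {(\<lambda>t. Tr (2*m) (a * t^(3^m+1)) * Tr (2*m) (a' * t^(3^m+1))) | a a'.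
         a \<in> subF m - {0} \<and> a' \<in> subF m - {0}}
   \<union> {(\<lambda>t. Tr (2*m) (a * t^(3^m+1))) | a. a \<in> subF m - {0}}
   \<union> {(\<lambda>t. 1)}"

end

theory Submission
  imports Defs "HOL-Computational_Algebra.Polynomial"
begin

lemma char3:
  assumes "card (UNIV :: 'a::{field,finite} set) = 3 ^ (2*m)" "m \<ge> 1"
  shows "(3::'a) = 0"
proof -
  have "(\<Sum>y\<in>(UNIV::'a set). 1 + y) = (\<Sum>y\<in>UNIV. y)"
    by (rule sum.reindex_bij_witness[of _ "\<lambda>y. y - 1" "\<lambda>y. 1 + y"]) auto
  hence "of_nat (card (UNIV::'a set)) = (0::'a)"
    by (simp add: sum.distrib)
  hence "(of_nat (3 ^ (2*m)) :: 'a) = 0" using assms by simp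
  hence "(3::'a) ^ (2*m) = 0" by simp
  thus ?thesis by simp
qed

lemma fermat:
  fixes x :: "'a::{field,finite}"
  shows "x ^ card (UNIV :: 'a set) = x"
proof (cases "x = 0")
  case True thus ?thesis by (simp add: zero_power finite_UNIV_card_ge_0)
next
  case False
  let ?S = "UNIV - {0::'a}"
  have "(\<Prod>y\<in>?S. x * y) = (\<Prod>y\<in>?S. y)"
  proof (rule prod.reindex_bij_witness[of _ "\<lambda>y. y / x" "\<lambda>y. x * y"])
    fix a assume "a \<in> ?S" thus "x * (a / x) = a" using False by simp
  next
    fix a assume "a \<in> ?S" thus "a / x \<in> ?S" using False by simp
  next
    fix a assume "a \<in> ?S" thus "x * a / x = a" using False by simp
  next
    fix a assume "a \<in> ?S" thus "x * a \<in> ?S" using False by simp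
  qed simp
  hence "x ^ card ?S * (\<Prod>y\<in>?S. y) = 1 * (\<Prod>y\<in>?S. y)"
    by (simp add: prod.distrib)
  moreover have "(\<Prod>y\<in>?S. y) \<noteq> 0" by simp
  ultimately have "x ^ card ?S = 1" by (metis mult_cancel_right)
  moreover have "card ?S = card (UNIV::'a set) - 1"
    by (simp add: card_Diff_singleton)
  moreover have "card (UNIV::'a set) \<ge> 1" by (simp add: Suc_leI finite_UNIV_card_ge_0)
  ultimately show ?thesis by (metis power_Suc2 mult.commute mult_1 Suc_diff_1 le_less_trans zero_less_one less_le_trans)
qed
lemma frob:
  fixes x y :: "'a::field"
  assumes "(3::'a) = 0"
  shows "(x + y) ^ 3 = x ^ 3 + y ^ 3"
proof -
  have "(x + y) ^ 3 = x ^ 3 + y ^ 3 + 3 * (x^2*y + x*y^2)"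
    by (simp add: power3_eq_cube power2_eq_square algebra_simps)
  thus ?thesis using assms by simp
qed

lemma frob_pow:
  fixes x y :: "'a::field"
  assumes "(3::'a) = 0"
  shows "(x + y) ^ (3^i) = x ^ (3^i) + y ^ (3^i)"
proof (induction i)
  case 0 thus ?case by simp
next
  case (Suc i)
  have "(x + y) ^ (3^Suc i) = ((x+y)^(3^i))^3" by (simp add: power_mult[symmetric] mult.commute)
  also have "\<dots> = (x ^ (3^i) + y ^ (3^i)) ^ 3" using Suc by simp
  also have "\<dots> = (x ^ (3^i))^3 + (y ^ (3^i))^3" by (rule frob[OF assms])
  also have "\<dots> = x ^ (3^Suc i) + y ^ (3^Suc i)" by (simp add: power_mult[symmetric] mult.commute)
  finally show ?case .
qed

lemma frob_neg:
  fixes x :: "'a::field"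
  assumes "(3::'a) = 0"
  shows "(- x) ^ (3^i) = - (x ^ (3^i))"
proof -
  have "0 = (x + - x) ^ (3^i)" by simp
  also have "\<dots> = x ^ (3^i) + (-x) ^ (3^i)" by (rule frob_pow[OF assms])
  finally show ?thesis by (simp add: eq_neg_iff_add_eq_0 add.commute)
qed

lemma frob_sum:
  fixes f :: "'b \<Rightarrow> 'a::field"
  assumes "(3::'a) = 0"
  shows "(\<Sum>i\<in>I. f i) ^ (3^j) = (\<Sum>i\<in>I. f i ^ (3^j))"
proof (induction I rule: infinite_finite_induct)
  case (infinite A) thus ?case by simp
next
  case empty thus ?case by simp
next
  case (insert x F) thus ?case by (simp add: frob_pow[OF assms])
qed

lemma roots_bound:
  fixes c :: "'a::field"
  assumes "n \<ge> 1"
  shows "card {x. x ^ n = c} \<le> n"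
proof -
  let ?p = "monom 1 n + [:-c:]"
  have deg: "degree ?p = n" using assms by (subst degree_add_eq_left) (simp_all add: degree_monom_eq)
  hence "?p \<noteq> 0" using assms by auto
  hence "card {x. poly ?p x = 0} \<le> degree ?p" by (rule card_poly_roots_bound)
  moreover have "{x. poly ?p x = 0} = {x. x ^ n = c}" by (auto simp: poly_monom)
  ultimately show ?thesis using deg by simp
qed

lemma F3_iff: "(x::'a::field) \<in> F3 \<longleftrightarrow> x = 0 \<or> x = 1 \<or> x = -1"
proof -
  have "x ^ 3 - x = x * (x - 1) * (x + 1)" by (simp add: power3_eq_cube algebra_simps)
  hence "x ^ 3 = x \<longleftrightarrow> x * (x - 1) * (x + 1) = 0" by (metis eq_iff_diff_eq_0)
  thus ?thesis unfolding F3_def by (auto simp: eq_neg_iff_add_eq_0)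
qed

lemma F3_0[simp]: "0 \<in> F3" and F3_1[simp]: "1 \<in> F3" and F3_m1[simp]: "-1 \<in> F3"
  by (auto simp: F3_iff)

lemma F3_add: assumes "(3::'a::field) = 0" "(x::'a) \<in> F3" "y \<in> F3" shows "x + y \<in> F3"
  using assms frob[OF assms(1), of x y] unfolding F3_def by simp

lemma F3_mult: "(x::'a::field) \<in> F3 \<Longrightarrow> y \<in> F3 \<Longrightarrow> x * y \<in> F3"
  unfolding F3_def by (simp add: power_mult_distrib)

lemma F3_neg: "(x::'a::field) \<in> F3 \<Longrightarrow> - x \<in> F3"
  unfolding F3_iff by auto

lemma F3_sq: "(x::'a::field) \<in> F3 \<Longrightarrow> x \<noteq> 0 \<Longrightarrow> x ^ 2 = 1"
  unfolding F3_iff by auto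

lemma F3_pow: "(x::'a::field) \<in> F3 \<Longrightarrow> x ^ (3^j) = x"
proof (induction j)
  case 0 thus ?case by simp
next
  case (Suc j)
  have "x ^ (3 ^ Suc j) = (x ^ (3^j)) ^ 3" by (simp add: power_mult[symmetric] mult.commute)
  thus ?case using Suc unfolding F3_def by simp
qed

lemma F3_two: assumes "(3::'a::field) = 0" shows "(2::'a) = -1"
proof -
  have "(2::'a) + 1 = 0" using assms by simp
  thus ?thesis by (simp add: eq_neg_iff_add_eq_0)
qed

lemma Tr_add: assumes "(3::'a::field) = 0" shows "Tr s (x + y) = Tr s x + Tr s (y::'a)"
  unfolding Tr_def by (simp add: frob_pow[OF assms] sum.distrib)

lemma Tr_zero[simp]: "Tr s (0::'a::field) = 0"
  unfolding Tr_def by (simp add: power_0_left)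

lemma Tr_neg: assumes "(3::'a::field) = 0" shows "Tr s (- x) = - Tr s (x::'a)"
  unfolding Tr_def by (simp add: frob_neg[OF assms] sum_negf)

lemma Tr_diff: assumes "(3::'a::field) = 0" shows "Tr s (x - y) = Tr s x - Tr s (y::'a)"
  using Tr_add[OF assms, of s x "-y"] Tr_neg[OF assms, of s y] by simp

lemma Tr_cube:
  assumes "(3::'a::field) = 0" "(x::'a) ^ (3^s) = x"
  shows "Tr s x ^ 3 = Tr s x"
proof -
  let ?f = "\<lambda>i. x ^ (3^i)"
  have "Tr s x ^ 3 = Tr s x ^ (3^1)" by simp
  also have "\<dots> = (\<Sum>i<s. ?f i ^ (3^1))" unfolding Tr_def by (rule frob_sum[OF assms(1)])
  also have "\<dots> = (\<Sum>i<s. ?f (Suc i))" by (simp add: power_mult[symmetric] mult.commute)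
  also have "\<dots> = (\<Sum>i<s. ?f i)"
  proof -
    have "(\<Sum>i<s. ?f (Suc i)) + ?f 0 = (\<Sum>i<Suc s. ?f i)"
      by (simp only: sum.lessThan_Suc_shift add.commute)
    also have "\<dots> = (\<Sum>i<s. ?f i) + ?f s" by simp
    finally show ?thesis using assms(2) by simp
  qed
  finally show ?thesis unfolding Tr_def .
qed

lemma Tr_F3:
  assumes "(3::'a::field) = 0" "(x::'a) ^ (3^s) = x"
  shows "Tr s x \<in> F3"
  using Tr_cube[OF assms] unfolding F3_def by simp

lemma Tr_pow:
  assumes "(3::'a::field) = 0" "(x::'a) ^ (3^s) = x"
  shows "Tr s (x ^ (3^j)) = Tr s x"
proof -
  have "Tr s (x ^ (3^j)) = (\<Sum>i<s. (x ^ (3^i)) ^ (3^j))"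
    unfolding Tr_def by (simp add: power_mult[symmetric] mult.commute)
  also have "\<dots> = Tr s x ^ (3^j)" unfolding Tr_def by (rule frob_sum[OF assms(1), symmetric])
  also have "\<dots> = Tr s x" by (rule F3_pow[OF Tr_F3[OF assms]])
  finally show ?thesis .
qed

lemma sum_lessThan_add_nat: "(\<Sum>i<a+(b::nat). f i) = (\<Sum>i<a. f i) + (\<Sum>i<b. f (a+i))"
  by (induction b) (simp_all add: add.assoc)

lemma Tr_split:
  assumes "(y::'a::field) ^ (3^m) = y"
  shows "Tr (2*m) y = 2 * Tr m y"
proof -
  have pw: "y ^ (3^(m+i)) = y ^ (3^i)" for i
    by (metis assms power_add power_mult mult.commute)
  have "Tr (2*m) y = (\<Sum>i<m+m. y ^ (3^i))" unfolding Tr_def by (simp add: mult_2)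
  also have "\<dots> = Tr m y + Tr m y" unfolding sum_lessThan_add_nat Tr_def pw ..
  finally show ?thesis by simp
qed

lemma span3_zero: "(\<lambda>t. 0) \<in> span3 S"
  unfolding span3_def by (rule CollectI, rule exI[of _ 0]) auto

lemma span3_base: "x \<in> S \<Longrightarrow> x \<in> span3 S"
  unfolding span3_def
  by (rule CollectI, rule exI[of _ 1], rule exI[of _ "\<lambda>_. 1"], rule exI[of _ "\<lambda>_. x"]) auto

lemma span3_add:
  assumes "f \<in> span3 S" "g \<in> span3 S"
  shows "(\<lambda>t. f t + g t) \<in> span3 S"
proof -
  from assms(1) obtain n1 :: nat and c1 v1 where 1: "\<forall>i<n1. c1 i \<in> F3 \<and> v1 i \<in> S" "f = (\<lambda>t. \<Sum>i<n1. c1 i * v1 i t)"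
    unfolding span3_def mem_Collect_eq by (elim exE conjE) simp
  from assms(2) obtain n2 :: nat and c2 v2 where 2: "\<forall>i<n2. c2 i \<in> F3 \<and> v2 i \<in> S" "g = (\<lambda>t. \<Sum>i<n2. c2 i * v2 i t)"
    unfolding span3_def mem_Collect_eq by (elim exE conjE) simp
  define c where "c i = (if i < n1 then c1 i else c2 (i - n1))" for i
  define v where "v i = (if i < n1 then v1 i else v2 (i - n1))" for i
  have "\<forall>i<n1+n2. c i \<in> F3 \<and> v i \<in> S"
    using 1(1) 2(1) unfolding c_def v_def by auto
  moreover have "(\<lambda>t. f t + g t) = (\<lambda>t. \<Sum>i<n1+n2. c i * v i t)"
    unfolding sum_lessThan_add_nat 1(2) 2(2) c_def v_def by simp
  ultimately show ?thesis unfolding span3_def by blast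
qed

lemma span3_smult:
  assumes "a \<in> F3" "f \<in> span3 S"
  shows "(\<lambda>t. a * f t) \<in> span3 S"
proof -
  from assms(2) obtain n :: nat and c v where 1: "\<forall>i<n. c i \<in> F3 \<and> v i \<in> S" "f = (\<lambda>t. \<Sum>i<n. c i * v i t)"
    unfolding span3_def mem_Collect_eq by (elim exE conjE) simp
  have "\<forall>i<n. a * c i \<in> F3 \<and> v i \<in> S" using 1(1) assms(1) F3_mult by blast
  moreover have "(\<lambda>t. a * f t) = (\<lambda>t. \<Sum>i<n. (a * c i) * v i t)"
    unfolding 1(2) by (simp add: sum_distrib_left mult.assoc)
  ultimately show ?thesis unfolding span3_def mem_Collect_eq by (intro exI[of _ n] exI[of _ "\<lambda>i. a * c i"] exI[of _ v]) simp
qed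

lemma span3_diff:
  assumes "f \<in> span3 S" "g \<in> span3 S"
  shows "(\<lambda>t. f t - g t) \<in> span3 S"
proof -
  have "(\<lambda>t. (-1) * g t) \<in> span3 S" by (rule span3_smult) (use assms in auto)
  from span3_add[OF assms(1) this] show ?thesis by simp
qed

lemma span3_subset:
  assumes "X \<subseteq> span3 Y"
  shows "span3 X \<subseteq> span3 Y"
proof
  fix f assume "f \<in> span3 X"
  then obtain n :: nat and c v where 1: "\<forall>i<n. c i \<in> F3 \<and> v i \<in> X" "f = (\<lambda>t. \<Sum>i<n. c i * v i t)"
    unfolding span3_def mem_Collect_eq by (elim exE conjE) simp
  have "\<forall>k\<le>n. (\<lambda>t. \<Sum>i<k. c i * v i t) \<in> span3 Y"
  proof (intro allI impI)
    fix k assume "k \<le> n"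
    thus "(\<lambda>t. \<Sum>i<k. c i * v i t) \<in> span3 Y"
    proof (induction k)
      case 0 thus ?case using span3_zero by simp
    next
      case (Suc k)
      have "v k \<in> span3 Y" using 1(1) Suc.prems assms by auto
      hence "(\<lambda>t. c k * v k t) \<in> span3 Y" using 1(1) Suc.prems by (intro span3_smult) auto
      from span3_add[OF Suc.IH[OF Suc_leD[OF Suc.prems]] this] show ?case by simp
    qed
  qed
  thus "f \<in> span3 Y" using 1(2) by simp
qed

lemma span3_eqI: "X \<subseteq> span3 Y \<Longrightarrow> Y \<subseteq> span3 X \<Longrightarrow> span3 X = span3 Y"
  using span3_subset by blast

lemma incvec_sq:
  assumes "\<forall>t. c t \<in> (F3::'a::field set)"
  shows "incvec {t. c t \<noteq> 0} = (\<lambda>t. (c t) ^ 2)"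
  unfolding incvec_def using assms F3_sq by fastforce

lemma Tr_nonzero:
  fixes A :: "'a::field set"
  assumes "s \<ge> 1" "finite A" "card A > 3^(s-1)"
  shows "\<exists>y\<in>A. Tr s y \<noteq> 0"
proof (rule ccontr)
  assume H: "\<not> (\<exists>y\<in>A. Tr s y \<noteq> 0)"
  define p :: "'a poly" where "p = (\<Sum>i<s. monom 1 (3^i))"
  have ev: "poly p y = Tr s y" for y unfolding p_def Tr_def by (simp add: poly_sum poly_monom)
  have "degree p \<le> 3^(s-1)" unfolding p_def
  proof (rule degree_sum_le)
    fix i assume "i \<in> {..<s}"
    hence "i \<le> s - 1" by auto
    hence "(3::nat)^i \<le> 3^(s-1)" by (rule power_increasing) simp
    thus "degree (monom (1::'a) (3^i)) \<le> 3^(s-1)" using degree_monom_le order_trans by blast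
  qed simp
  moreover have "coeff p 1 = 1"
  proof -
    have "coeff p 1 = (\<Sum>i<s. if 3^i = (1::nat) then (1::'a) else 0)" unfolding p_def coeff_sum by simp
    also have "\<dots> = (\<Sum>i\<in>{0}. if 3^i = (1::nat) then (1::'a) else 0)"
      by (rule sum.mono_neutral_right) (use assms(1) in auto)
    finally show ?thesis by simp
  qed
  hence "p \<noteq> 0" by auto
  hence "card {y. poly p y = 0} \<le> degree p" by (rule card_poly_roots_bound)
  moreover have "A \<subseteq> {y. poly p y = 0}" using H ev by auto
  hence "card A \<le> card {y. poly p y = 0}" using poly_roots_finite[OF \<open>p \<noteq> 0\<close>] by (intro card_mono) auto
  ultimately show False using assms(3) by linarith
qed

lemma balanced:
  fixes f :: "'a::field \<Rightarrow> 'a"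
  assumes three: "(3::'a) = 0" and fin: "finite S" and cl: "\<And>x y. x \<in> S \<Longrightarrow> y \<in> S \<Longrightarrow> x + y \<in> S"
    and vals: "\<And>x. x \<in> S \<Longrightarrow> f x \<in> F3"
    and add: "\<And>x y. x \<in> S \<Longrightarrow> y \<in> S \<Longrightarrow> f (x + y) = f x + f y"
    and nz: "x0 \<in> S" "f x0 \<noteq> 0" and u: "u \<in> F3"
  shows "3 * card {x\<in>S. f x = u} = card S"
proof -
  have two: "(2::'a) = -1" by (rule F3_two[OF three])
  obtain y0 where y0: "y0 \<in> S" "f y0 = 1"
  proof (cases "f x0 = 1")
    case True thus ?thesis using nz that by blast
  next
    case False
    hence "f x0 = -1" using vals[OF nz(1)] nz(2) unfolding F3_iff by auto
    have "f (x0 + x0) = f x0 + f x0" by (rule add[OF nz(1) nz(1)])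
    also have "\<dots> = 1" using \<open>f x0 = -1\<close> two by simp
    finally have "f (x0 + x0) = 1" .
    thus ?thesis using that cl[OF nz(1) nz(1)] by blast
  qed
  define Fb where "Fb v = {x\<in>S. f x = v}" for v
  have step: "card (Fb v) = card (Fb (v + 1))" for v
  proof (rule bij_betw_same_card[of "\<lambda>x. x + y0"], rule bij_betw_byWitness[of _ "\<lambda>x. x + y0 + y0"])
    have y3: "y0 + y0 + y0 = 0"
    proof -
      have "y0 + y0 + y0 = 3 * y0" by (simp add: algebra_simps)
      thus ?thesis using three by simp
    qed
    show "\<forall>a\<in>Fb v. a + y0 + y0 + y0 = a" using y3 by (simp add: add.assoc)
    show "\<forall>a\<in>Fb (v + 1). a + y0 + y0 + y0 = a" using y3 by (simp add: add.assoc)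
    show "(\<lambda>x. x + y0) ` Fb v \<subseteq> Fb (v + 1)" unfolding Fb_def using add cl y0 by auto
    show "(\<lambda>x. x + y0 + y0) ` Fb (v + 1) \<subseteq> Fb v"
    proof
      fix z assume "z \<in> (\<lambda>x. x + y0 + y0) ` Fb (v + 1)"
      then obtain x where x: "x \<in> S" "f x = v + 1" "z = x + y0 + y0" unfolding Fb_def by auto
      have xy: "x + y0 \<in> S" by (rule cl[OF x(1) y0(1)])
      have "z \<in> S" unfolding x(3) by (rule cl[OF xy y0(1)])
      moreover have "f z = v + 1 + 1 + 1" unfolding x(3) add[OF xy y0(1)] add[OF x(1) y0(1)] x(2) y0(2) ..
      moreover have "v + 1 + 1 + 1 = v" using three by (simp add: add.assoc)
      ultimately show "z \<in> Fb v" unfolding Fb_def by simp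
    qed
  qed
  have e1: "card (Fb 0) = card (Fb 1)" using step[of 0] by simp
  have e2: "card (Fb 1) = card (Fb (-1))" using step[of 1] two by (simp add: one_add_one)
  have "S = Fb 0 \<union> Fb 1 \<union> Fb (-1)" unfolding Fb_def using vals F3_iff by blast
  moreover have "(1::'a) \<noteq> -1"
  proof
    assume h: "(1::'a) = -1"
    hence "(2::'a) = 1" using two by simp
    hence "(1::'a) + 1 = 1 + 0" by (metis one_add_one add_0_right)
    hence "(1::'a) = 0" by (simp only: add_left_cancel)
    thus False by simp
  qed
  ultimately have "card S = card (Fb 0) + card (Fb 1) + card (Fb (-1))"
  proof -
    assume SU: "S = Fb 0 \<union> Fb 1 \<union> Fb (-1)" and ne: "(1::'a) \<noteq> -1"
    have fF: "finite (Fb v)" for v unfolding Fb_def using fin by simp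
    have "card (Fb 0 \<union> Fb 1) = card (Fb 0) + card (Fb 1)"
      by (rule card_Un_disjoint[OF fF fF]) (auto simp: Fb_def)
    moreover have "card (Fb 0 \<union> Fb 1 \<union> Fb (-1)) = card (Fb 0 \<union> Fb 1) + card (Fb (-1))"
      by (rule card_Un_disjoint) (use fF ne in \<open>auto simp: Fb_def\<close>)
    ultimately show ?thesis using SU by simp
  qed
  moreover have "card {x\<in>S. f x = u} = card (Fb 0)"
    using u e1 e2 unfolding F3_iff Fb_def by auto
  ultimately show ?thesis using e1 e2 by simp
qed

lemma pow_qq:
  assumes "card (UNIV :: 'a::{field,finite} set) = 3 ^ (2*m)"
  shows "(x::'a) ^ (3^m * 3^m) = x"
proof -
  have "(3::nat)^m * 3^m = 3^(2*m)" by (simp add: mult_2 power_add)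
  thus ?thesis using fermat[of x] assms by simp
qed

lemma subF_iff: "x \<in> subF m \<longleftrightarrow> x ^ (3^m) = x" unfolding subF_def by simp

lemma subF_0[simp]: "(0::'a::field) \<in> subF m" unfolding subF_def by simp
lemma subF_1[simp]: "(1::'a::field) \<in> subF m" unfolding subF_def by simp
lemma subF_add: "(3::'a::field) = 0 \<Longrightarrow> x \<in> subF m \<Longrightarrow> y \<in> subF m \<Longrightarrow> (x::'a) + y \<in> subF m"
  unfolding subF_def by (simp add: frob_pow)
lemma subF_neg: "(3::'a::field) = 0 \<Longrightarrow> x \<in> subF m \<Longrightarrow> - (x::'a) \<in> subF m"
  unfolding subF_def by (simp add: frob_neg)
lemma subF_diff: "(3::'a::field) = 0 \<Longrightarrow> x \<in> subF m \<Longrightarrow> y \<in> subF m \<Longrightarrow> (x::'a) - y \<in> subF m"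
  using subF_add[of x m "-y"] subF_neg[of y m] by simp
lemma subF_mult: "x \<in> subF m \<Longrightarrow> y \<in> subF m \<Longrightarrow> (x::'a::field) * y \<in> subF m"
  unfolding subF_def by (simp add: power_mult_distrib)
lemma subF_divide: "x \<in> subF m \<Longrightarrow> y \<in> subF m \<Longrightarrow> (x::'a::field) / y \<in> subF m"
  unfolding subF_def by (simp add: power_divide)

lemma norm_facts:
  assumes card: "card (UNIV :: 'a::{field,finite} set) = 3 ^ (2*m)" and m: "m \<ge> 1"
  shows "card (subF m :: 'a set) = 3^m"
    and "\<And>y. y \<in> subF m - {0} \<Longrightarrow> card {t::'a. t ^ (3^m + 1) = y} = 3^m + 1"
proof -
  define q :: nat where "q = 3^m"
  have q3: "q \<ge> 3" unfolding q_def using m by (metis power_one_right power_increasing zero_less_numeral less_imp_le_nat one_le_numeral)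
  define R where "R = (subF m :: 'a set) - {0}"
  have qq: "(x::'a) ^ (q * q) = x" for x unfolding q_def by (rule pow_qq[OF card])
  have R1: "x ^ (q - 1) = 1" if "x \<in> R" for x
  proof -
    have "x ^ (q - 1) * x = x ^ q" using q3 by (metis power_Suc2 Suc_diff_1 less_le_trans zero_less_numeral le_less_trans le_refl order.strict_trans1 zero_less_Suc numeral_3_eq_3)
    also have "\<dots> = x" using that unfolding R_def subF_def q_def by simp
    finally show ?thesis using that unfolding R_def by simp
  qed
  have cardR: "card R \<le> q - 1"
  proof -
    have "card R \<le> card {x::'a. x ^ (q - 1) = 1}" using R1 by (intro card_mono) auto
    also have "\<dots> \<le> q - 1" using q3 by (intro roots_bound) simp
    finally show ?thesis .
  qed
  define S where "S = (UNIV :: 'a set) - {0}"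
  define N where "N t = t ^ (q + 1)" for t :: 'a
  have NR: "N t \<in> R" if "t \<in> S" for t
  proof -
    have "N t ^ q = t ^ (q * q) * t ^ q" unfolding N_def by (simp add: power_mult[symmetric] power_add algebra_simps)
    also have "\<dots> = N t" unfolding N_def qq by (simp add: power_add mult.commute)
    finally show ?thesis using that unfolding R_def S_def subF_def q_def N_def by simp
  qed
  define fib where "fib y = card {x\<in>S. N x = y}" for y
  have sumfib: "(\<Sum>y\<in>R. fib y) = card S"
    unfolding fib_def using sum.group[of S R N "\<lambda>_. 1::nat"] NR by auto
  have cardS: "card S = q * q - 1" unfolding S_def using card
    by (simp add: card_Diff_singleton q_def mult_2 power_add)
  have fible: "fib y \<le> q + 1" for y
  proof -
    have "fib y \<le> card {t::'a. t ^ (q+1) = y}" unfolding fib_def N_def by (intro card_mono) auto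
    also have "\<dots> \<le> q + 1" by (rule roots_bound) simp
    finally show ?thesis .
  qed
  have A: "(\<Sum>y\<in>R. fib y) \<le> card R * (q + 1)"
  proof -
    have "(\<Sum>y\<in>R. fib y) \<le> (\<Sum>y\<in>R. q + 1)" using fible by (intro sum_mono)
    thus ?thesis by simp
  qed
  have B: "card R * (q + 1) \<le> (q - 1) * (q + 1)" using cardR by (intro mult_le_mono1)
  have C: "(q - 1) * (q + 1) = q * q - 1" using q3 by (simp add: algebra_simps diff_mult_distrib)
  have "card R * (q + 1) = (q - 1) * (q + 1)" using A B C sumfib cardS by linarith
  hence cR: "card R = q - 1" by (metis mult_right_cancel add_gr_0 zero_less_one less_numeral_extra(3))
  have "subF m = insert (0::'a) R" unfolding R_def by auto
  moreover have "card (insert 0 R) = Suc (card R)" by (rule card_insert_disjoint) (auto simp: R_def)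
  ultimately have "card (subF m :: 'a set) = Suc (card R)" by simp
  thus "card (subF m :: 'a set) = 3^m" using cR q3 q_def by simp
  have fibeq: "fib y = q + 1" if "y \<in> R" for y
  proof (rule ccontr)
    assume "fib y \<noteq> q + 1"
    hence "fib y < q + 1" using fible[of y] by simp
    hence "(\<Sum>y\<in>R. fib y) < (\<Sum>y\<in>R. q + 1)" using that fible by (intro sum_strict_mono_ex1) auto
    thus False using sumfib cardS cR q3 by (simp add: algebra_simps diff_mult_distrib)
  qed
  fix y :: 'a assume "y \<in> subF m - {0}"
  hence yR: "y \<in> R" unfolding R_def .
  have "{t::'a. t ^ (3^m+1) = y} = {x\<in>S. N x = y}" using yR unfolding S_def N_def R_def q_def
    by (auto simp: power_0_left)
  thus "card {t::'a. t ^ (3^m + 1) = y} = 3^m + 1" using fibeq[OF yR] unfolding fib_def q_def by simp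
qed

lemma norm_in:
  assumes card: "card (UNIV :: 'a::{field,finite} set) = 3 ^ (2*m)" and "(t::'a) \<noteq> 0"
  shows "t ^ (3^m + 1) \<in> subF m - {0}"
proof -
  have "(t ^ (3^m + 1)) ^ (3^m) = t ^ (3^m * 3^m) * t ^ (3^m)"
    by (simp add: power_mult[symmetric] power_add algebra_simps)
  also have "\<dots> = t ^ (3^m + 1)" unfolding pow_qq[OF card] by (simp add: power_add mult.commute)
  finally show ?thesis using assms(2) unfolding subF_def by simp
qed

lemma count_L:
  assumes card: "card (UNIV :: 'a::{field,finite} set) = 3 ^ (2*m)" and m: "m \<ge> 1"
    and b: "(b::'a) \<noteq> 0" and u: "u \<in> F3"
  shows "3 * card {t::'a. Tr (2*m) (b*t) = u} = 3^(2*m)"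
proof -
  have three: "(3::'a) = 0" by (rule char3[OF card m])
  have fer: "(x::'a) ^ (3^(2*m)) = x" for x using fermat[of x] card by simp
  obtain y :: 'a where y: "Tr (2*m) y \<noteq> 0"
    using Tr_nonzero[of "2*m" "UNIV :: 'a set"] card m by auto
  have "3 * card {t\<in>UNIV. Tr (2*m) (b*t) = u} = card (UNIV::'a set)"
  proof (rule balanced[OF three, of _ _ "y / b"])
    show "\<And>x. x \<in> UNIV \<Longrightarrow> Tr (2 * m) (b * x) \<in> F3" using Tr_F3[OF three fer] by blast
    show "\<And>x y. x \<in> UNIV \<Longrightarrow> y \<in> UNIV \<Longrightarrow> Tr (2 * m) (b * (x + y)) = Tr (2 * m) (b * x) + Tr (2 * m) (b * y)"
      by (simp add: distrib_left Tr_add[OF three])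
    show "Tr (2 * m) (b * (y / b)) \<noteq> 0" using y b by simp
  qed (use u in auto)
  thus ?thesis using card by simp
qed

lemma count_sub:
  assumes card: "card (UNIV :: 'a::{field,finite} set) = 3 ^ (2*m)" and m: "m \<ge> 1"
    and a: "(a::'a) \<in> subF m" "a \<noteq> 0" and u: "u \<in> F3"
  shows "3 * card {x\<in>subF m. Tr (2*m) (a*x) = u} = 3^m"
proof -
  have three: "(3::'a) = 0" by (rule char3[OF card m])
  have fer: "(x::'a) ^ (3^(2*m)) = x" for x using fermat[of x] card by simp
  have cs: "card (subF m :: 'a set) = 3^m" by (rule norm_facts(1)[OF card m])
  have "(3::nat)^(m-1) < 3^m" using m by (intro power_strict_increasing) auto
  then obtain y :: 'a where y: "y \<in> subF m" "Tr m y \<noteq> 0"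
    using Tr_nonzero[of "m" "subF m :: 'a set"] cs m by auto
  have "Tr (2*m) y = 2 * Tr m y" by (rule Tr_split) (use y in \<open>simp add: subF_def\<close>)
  moreover have "(2::'a) \<noteq> 0" using F3_two[OF three] by (metis neg_0_equal_iff_equal zero_neq_one)
  ultimately have y2: "Tr (2*m) y \<noteq> 0" using y by simp
  have "3 * card {x\<in>subF m. Tr (2*m) (a*x) = u} = card (subF m :: 'a set)"
  proof (rule balanced[OF three, of _ _ "y / a"])
    show "\<And>x. Tr (2 * m) (a * x) \<in> F3" using Tr_F3[OF three fer] by blast
    show "\<And>x y. Tr (2 * m) (a * (x + y)) = Tr (2 * m) (a * x) + Tr (2 * m) (a * y)"
      by (simp add: distrib_left Tr_add[OF three])
    show "Tr (2 * m) (a * (y / a)) \<noteq> 0" using y2 a by simp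
    show "y / a \<in> subF m" using y a subF_divide by blast
    show "finite (subF m :: 'a set)" by simp
    show "\<And>x y. (x::'a) \<in> subF m \<Longrightarrow> y \<in> subF m \<Longrightarrow> x + y \<in> subF m" using subF_add[OF three] by blast
  qed (use u in auto)
  thus ?thesis using cs by simp
qed

lemma count_Q:
  assumes card: "card (UNIV :: 'a::{field,finite} set) = 3 ^ (2*m)" and m: "m \<ge> 1"
    and a: "(a::'a) \<in> subF m" "a \<noteq> 0" and u: "u \<in> F3"
  shows "card {t::'a. Tr (2*m) (a * t^(3^m+1)) = u}
         = (if u = 0 then 1 + (3^m+1)*(3^(m-1) - 1) else (3^m+1)*3^(m-1))"
proof -
  define q :: nat where "q = 3^m"
  define p :: nat where "p = 3^(m-1)"
  have qp: "q = 3 * p" unfolding q_def p_def using m by (metis power_Suc Suc_diff_1 less_le_trans zero_less_one)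
  have p1: "p \<ge> 1" unfolding p_def by simp
  define R where "R = (subF m :: 'a set) - {0}"
  define S where "S = (UNIV :: 'a set) - {0}"
  define N where "N t = t ^ (q + 1)" for t :: 'a
  define Z where "Z = {t::'a. Tr (2*m) (a * N t) = u}"
  have NR: "N t \<in> R" if "t \<in> S" for t using norm_in[OF card] that unfolding N_def R_def S_def q_def by auto
  have "(\<Sum>y\<in>R. card {t\<in>Z \<inter> S. N t = y}) = card (Z \<inter> S)"
    using sum.group[of "Z \<inter> S" R N "\<lambda>_. 1::nat"] NR by auto
  moreover have "card {t\<in>Z \<inter> S. N t = y} = (if Tr (2*m) (a*y) = u then q + 1 else 0)" if "y \<in> R" for y
  proof -
    have "{t\<in>Z \<inter> S. N t = y} = (if Tr (2*m) (a*y) = u then {t. t ^ (3^m + 1) = y} else {})"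
      using that unfolding Z_def S_def R_def N_def q_def by (auto simp: power_0_left)
    thus ?thesis using norm_facts(2)[OF card m, of y] that unfolding R_def q_def by simp
  qed
  ultimately have "card (Z \<inter> S) = (\<Sum>y\<in>R. if Tr (2*m) (a*y) = u then q + 1 else 0)" by simp
  also have "\<dots> = (\<Sum>y\<in>{y\<in>R. Tr (2*m) (a*y) = u}. q + 1)" by (rule sum.inter_filter[symmetric]) simp
  also have "\<dots> = card {y\<in>R. Tr (2*m) (a*y) = u} * (q + 1)" by simp
  finally have ZS: "card (Z \<inter> S) = card {y\<in>R. Tr (2*m) (a*y) = u} * (q + 1)" .
  have cF: "card {x\<in>subF m. Tr (2*m) (a*x) = u} = p"
    using count_sub[OF card m a u] qp unfolding q_def by simp
  have RF: "card {y\<in>R. Tr (2*m) (a*y) = u} = p - (if u = 0 then 1 else 0)"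
  proof (cases "u = 0")
    case True
    have "{x\<in>subF m. Tr (2*m) (a*x) = u} = insert 0 {y\<in>R. Tr (2*m) (a*y) = u}"
      using True unfolding R_def by auto
    moreover have "card (insert 0 {y\<in>R. Tr (2*m) (a*y) = u}) = Suc (card {y\<in>R. Tr (2*m) (a*y) = u})"
      by (rule card_insert_disjoint) (auto simp: R_def)
    ultimately show ?thesis using cF True by simp
  next
    case False
    have "{x\<in>subF m. Tr (2*m) (a*x) = u} = {y\<in>R. Tr (2*m) (a*y) = u}"
      using False unfolding R_def by auto
    thus ?thesis using cF False by simp
  qed
  have "card Z = card (Z \<inter> S) + (if u = 0 then 1 else 0)"
  proof (cases "u = 0")
    case True
    have "Z = insert 0 (Z \<inter> S)" using True unfolding Z_def S_def N_def by auto
    moreover have "card (insert 0 (Z \<inter> S)) = Suc (card (Z \<inter> S))"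
      by (rule card_insert_disjoint) (auto simp: S_def)
    ultimately show ?thesis using True by simp
  next
    case False
    have "Z = Z \<inter> S" using False unfolding Z_def S_def N_def by (auto simp: power_0_left)
    thus ?thesis using False by simp
  qed
  hence "card Z = (if u = 0 then 1 + (q+1)*(p - 1) else (q+1)*p)" using ZS RF by (simp add: mult.commute)
  thus ?thesis unfolding Z_def N_def q_def p_def .
qed

lemma card_shift:
  fixes t0 :: "'a::ab_group_add"
  shows "card {t. P (t + t0)} = card {s. P s}"
  by (rule bij_betw_same_card[of "\<lambda>t. t + t0"], rule bij_betw_byWitness[of _ "\<lambda>s. s - t0"]) auto

lemma shift_id:
  assumes card: "card (UNIV :: 'a::{field,finite} set) = 3 ^ (2*m)" and m: "m \<ge> 1"
    and a: "(a::'a) \<in> subF m"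
  shows "Tr (2*m) (a * (t + t0)^(3^m+1))
         = Tr (2*m) (a * t^(3^m+1) + (2 * a * t0^(3^m)) * t) + Tr (2*m) (a * t0^(3^m+1))"
proof -
  have three: "(3::'a) = 0" by (rule char3[OF card m])
  have fer: "(x::'a) ^ (3^(2*m)) = x" for x using fermat[of x] card by simp
  let ?q = "3^m :: nat"
  let ?T = "Tr (2*m) :: 'a \<Rightarrow> 'a"
  have aq: "a ^ ?q = a" using a unfolding subF_def by simp
  have e1: "(t + t0)^(?q+1) = t^(?q+1) + t^?q * t0 + t0^?q * t + t0^(?q+1)"
    by (simp add: power_add frob_pow[OF three] algebra_simps)
  define z where "z = a * t0^?q * t"
  have "(z) ^ ?q = a * t0 * t^?q"
    unfolding z_def using pow_qq[OF card, of t0] aq by (simp add: power_mult_distrib power_mult[symmetric])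
  hence "?T (a * t^?q * t0) = ?T (z ^ ?q)" by (simp add: ac_simps)
  also have "\<dots> = ?T z" by (rule Tr_pow[OF three fer])
  finally have e2: "?T (a * t^?q * t0) = ?T z" .
  have "?T (a * (t + t0)^(?q+1)) = ?T (a * t^(?q+1) + a * t^?q * t0 + z + a * t0^(?q+1))"
    unfolding e1 z_def by (simp add: algebra_simps)
  also have "\<dots> = ?T (a * t^(?q+1)) + ?T (a * t^?q * t0) + ?T z + ?T (a * t0^(?q+1))"
    by (simp add: Tr_add[OF three])
  also have "\<dots> = ?T (a * t^(?q+1)) + (?T z + ?T z) + ?T (a * t0^(?q+1))"
    unfolding e2 by (simp add: algebra_simps)
  also have "\<dots> = ?T (a * t^(?q+1) + (z + z)) + ?T (a * t0^(?q+1))"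
    by (simp only: Tr_add[OF three] add.assoc)
  also have "z + z = (2 * a * t0^?q) * t" unfolding z_def by (simp add: algebra_simps)
  finally show ?thesis .
qed

lemma code_shift:
  assumes card: "card (UNIV :: 'a::{field,finite} set) = 3 ^ (2*m)" and m: "m \<ge> 1"
    and a: "(a::'a) \<in> subF m" "a \<noteq> 0"
  obtains t0 where "\<And>t. Tr (2*m) (a * t^(3^m+1) + b * t) + h
                     = Tr (2*m) (a * (t + t0)^(3^m+1)) + (h - Tr (2*m) (a * t0^(3^m+1)))"
proof -
  have three: "(3::'a) = 0" by (rule char3[OF card m])
  have two: "(2::'a) \<noteq> 0" using F3_two[OF three] by (metis neg_0_equal_iff_equal zero_neq_one)
  define t0 where "t0 = (b / (2 * a)) ^ (3^m)"
  have "t0 ^ (3^m) = b / (2 * a)" unfolding t0_def power_mult[symmetric] by (rule pow_qq[OF card])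
  hence "2 * a * t0 ^ (3^m) = b" using two a by simp
  thus ?thesis using that[of t0] shift_id[OF card m a(1)] by simp
qed

definition wmin :: "nat \<Rightarrow> nat" where
  "wmin m = 3^(2*m) - (3^m + 1) * 3^(m-1)"

lemma hweight_zeros:
  "hweight (c :: 'a::finite \<Rightarrow> 'b::zero) = card (UNIV :: 'a set) - card {t. c t = 0}"
proof -
  have "{t. c t \<noteq> 0} = UNIV - {t. c t = 0}" by auto
  thus ?thesis unfolding hweight_def by (simp add: card_Diff_subset)
qed

lemma weight_shift:
  assumes card: "card (UNIV :: 'a::{field,finite} set) = 3 ^ (2*m)" and m: "m \<ge> 1"
    and a: "(a::'a) \<in> subF m" "a \<noteq> 0" and v: "v \<in> F3" "v \<noteq> 0"
  shows "hweight (\<lambda>t. Tr (2*m) (a * (t + t0)^(3^m+1)) + v) = wmin m"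
proof -
  have three: "(3::'a) = 0" by (rule char3[OF card m])
  have "card {t. Tr (2*m) (a * (t + t0)^(3^m+1)) + v = 0} = card {s. Tr (2*m) (a * s^(3^m+1)) = - v}"
    by (subst card_shift[symmetric, of _ t0]) (simp add: eq_neg_iff_add_eq_0)
  also have "\<dots> = (3^m + 1) * 3^(m-1)" using count_Q[OF card m a F3_neg[OF v(1)]] v by simp
  finally show ?thesis unfolding hweight_zeros wmin_def using card by simp
qed

lemma zeros_bound:
  assumes card: "card (UNIV :: 'a::{field,finite} set) = 3 ^ (2*m)" and m: "m \<ge> 1"
    and c: "c \<in> (codeC m :: ('a \<Rightarrow> 'a) set)" "c \<noteq> (\<lambda>_. 0)"
  shows "card {t. c t = 0} \<le> (3^m + 1) * 3^(m-1)"
proof -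
  have three: "(3::'a) = 0" by (rule char3[OF card m])
  have fer: "(x::'a) ^ (3^(2*m)) = x" for x using fermat[of x] card by simp
  define p :: nat where "p = 3^(m-1)"
  have qp: "(3::nat)^m = 3 * p" unfolding p_def using m by (metis power_Suc Suc_diff_1 less_le_trans zero_less_one)
  have p1: "p \<ge> 1" unfolding p_def by simp
  obtain a b h where c_eq: "c = (\<lambda>t. Tr (2*m) (a * t ^ (3^m + 1) + b * t) + h)"
    and a: "(a::'a) \<in> subF m" and h: "h \<in> F3"
    using c(1) unfolding codeC_def by blast
  show ?thesis
  proof (cases "a = 0")
    case False
    obtain t0 where t0: "\<And>t. Tr (2*m) (a * t^(3^m+1) + b * t) + h
                     = Tr (2*m) (a * (t + t0)^(3^m+1)) + (h - Tr (2*m) (a * t0^(3^m+1)))"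
      using code_shift[OF card m a False] by blast
    define u where "u = Tr (2*m) (a * t0^(3^m+1)) - h"
    have u: "u \<in> F3" unfolding u_def diff_conv_add_uminus
      by (intro F3_add[OF three] F3_neg Tr_F3[OF three fer] h)
    have "card {t. c t = 0} = card {t. Tr (2*m) (a * (t + t0)^(3^m+1)) = u}"
      unfolding c_eq t0 u_def by (simp add: algebra_simps eq_diff_eq)
    also have "\<dots> = card {s. Tr (2*m) (a * s^(3^m+1)) = u}" by (rule card_shift)
    also have "\<dots> = (if u = 0 then 1 + (3^m+1)*(p - 1) else (3^m+1)*p)"
      using count_Q[OF card m a False u] unfolding p_def .
    also have "\<dots> \<le> (3^m+1)*p"
    proof -
      obtain k where k: "p = Suc k" using p1 by (cases p) auto
      show ?thesis unfolding k by (simp add: algebra_simps)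
    qed
    finally show ?thesis unfolding p_def .
  next
    case True
    show ?thesis
    proof (cases "b = 0")
      case False
      have "3 * card {t. Tr (2*m) (b * t) = - h} = 3^(2*m)"
        using count_L[OF card m False] F3_neg[OF h] by blast
      moreover have "{t. c t = 0} = {t. Tr (2*m) (b * t) = - h}"
        unfolding c_eq True by (auto simp: eq_neg_iff_add_eq_0)
      moreover have "(3::nat)^(2*m) = 9 * p * p" using qp by (simp add: power_mult mult_2 power_add)
      ultimately have "card {t. c t = 0} = 3 * p * p" by simp
      also have "\<dots> \<le> (3^m + 1) * p" using qp by simp
      finally show ?thesis unfolding p_def .
    next
      case b0: True
      have "h \<noteq> 0" using c(2) unfolding c_eq True b0 by auto
      hence "{t. c t = 0} = {}" unfolding c_eq True b0 by simp
      thus ?thesis by simp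
    qed
  qed
qed

lemma wmin_pos: "m \<ge> 1 \<Longrightarrow> wmin m > 0"
proof -
  assume m: "m \<ge> 1"
  define p :: nat where "p = 3^(m-1)"
  have qp: "(3::nat)^m = 3 * p" unfolding p_def using m by (metis power_Suc Suc_diff_1 less_le_trans zero_less_one)
  have p1: "p \<ge> 1" unfolding p_def by simp
  have "(3::nat)^(2*m) = 9 * p * p" using qp by (simp add: power_mult mult_2 power_add)
  moreover have "(3 * p + 1) * p < 9 * p * p" using p1 by (simp add: algebra_simps)
  ultimately show ?thesis unfolding wmin_def qp p_def[symmetric] by simp
qed

lemma nz_of_hweight: "hweight c > 0 \<Longrightarrow> c \<noteq> (\<lambda>_. 0)"
  unfolding hweight_def by auto

lemma g_code:
  assumes card: "card (UNIV :: 'a::{field,finite} set) = 3 ^ (2*m)" and m: "m \<ge> 1"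
    and a: "(a::'a) \<in> subF m" and v: "v \<in> F3"
  shows "(\<lambda>t. Tr (2*m) (a * (t + t0)^(3^m+1)) + v) \<in> codeC m"
proof -
  have three: "(3::'a) = 0" by (rule char3[OF card m])
  have fer: "(x::'a) ^ (3^(2*m)) = x" for x using fermat[of x] card by simp
  have "(\<lambda>t. Tr (2*m) (a * (t + t0)^(3^m+1)) + v)
       = (\<lambda>t. Tr (2*m) (a * t^(3^m+1) + (2 * a * t0^(3^m)) * t) + (Tr (2*m) (a * t0^(3^m+1)) + v))"
    using shift_id[OF card m a] by (simp add: add.assoc)
  moreover have "Tr (2*m) (a * t0^(3^m+1)) + v \<in> F3" by (intro F3_add[OF three] Tr_F3[OF three fer] v)
  ultimately show ?thesis unfolding codeC_def using a by blast
qed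

lemma minw_eq:
  assumes card: "card (UNIV :: 'a::{field,finite} set) = 3 ^ (2*m)" and m: "m \<ge> 1"
  shows "minw (codeC m :: ('a \<Rightarrow> 'a) set) = wmin m"
  unfolding minw_def
proof (rule Min_eqI)
  show "finite {hweight c |c. c \<in> (codeC m :: ('a \<Rightarrow> 'a) set) \<and> c \<noteq> (\<lambda>_. 0)}"
    by (rule finite_image_set) simp
next
  fix y assume "y \<in> {hweight c |c. c \<in> (codeC m :: ('a \<Rightarrow> 'a) set) \<and> c \<noteq> (\<lambda>_. 0)}"
  then obtain c where c: "c \<in> (codeC m :: ('a \<Rightarrow> 'a) set)" "c \<noteq> (\<lambda>_. 0)" "y = hweight c" by blast
  have "card {t. c t = 0} \<le> (3^m + 1) * 3^(m-1)" by (rule zeros_bound[OF card m c(1,2)])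
  thus "wmin m \<le> y" unfolding c(3) hweight_zeros wmin_def card by simp
next
  let ?g = "\<lambda>t. Tr (2*m) ((1::'a) * (t + 0)^(3^m+1)) + 1"
  have w: "hweight ?g = wmin m" by (rule weight_shift[OF card m]) auto
  have "?g \<in> codeC m" by (rule g_code[OF card m]) auto
  moreover have "?g \<noteq> (\<lambda>_. 0)" using w wmin_pos[OF m] nz_of_hweight by metis
  ultimately show "wmin m \<in> {hweight c |c. c \<in> (codeC m :: ('a \<Rightarrow> 'a) set) \<and> c \<noteq> (\<lambda>_. 0)}"
    using w by force
qed

lemma code_F3:
  assumes card: "card (UNIV :: 'a::{field,finite} set) = 3 ^ (2*m)" and m: "m \<ge> 1"
    and c: "c \<in> (codeC m :: ('a \<Rightarrow> 'a) set)"
  shows "c t \<in> F3"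
proof -
  have three: "(3::'a) = 0" by (rule char3[OF card m])
  have fer: "(x::'a) ^ (3^(2*m)) = x" for x using fermat[of x] card by simp
  from c show ?thesis unfolding codeC_def using F3_add[OF three] Tr_F3[OF three fer] by blast
qed

lemma block_sq:
  assumes card: "card (UNIV :: 'a::{field,finite} set) = 3 ^ (2*m)" and m: "m \<ge> 1"
    and a: "(a::'a) \<in> subF m" "a \<noteq> 0" and v: "v \<in> F3" "v \<noteq> 0"
  shows "(\<lambda>t. (Tr (2*m) (a * (t + t0)^(3^m+1)) + v)^2) \<in> (incvec :: 'a set \<Rightarrow> 'a \<Rightarrow> 'a) ` blocks (codeC m)"
proof -
  let ?g = "\<lambda>t. Tr (2*m) (a * (t + t0)^(3^m+1)) + v"
  have gc: "?g \<in> codeC m" by (rule g_code[OF card m a(1) v(1)])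
  have w: "hweight ?g = wmin m" by (rule weight_shift[OF card m a v])
  have nz: "?g \<noteq> (\<lambda>_. 0)" using w wmin_pos[OF m] nz_of_hweight by metis
  have "{t. ?g t \<noteq> 0} \<in> blocks (codeC m)"
    unfolding blocks_def using gc nz w minw_eq[OF card m] by auto
  moreover have "incvec {t. ?g t \<noteq> 0} = (\<lambda>t. (?g t)^2)"
    by (rule incvec_sq) (use code_F3[OF card m gc] in blast)
  ultimately show ?thesis by (metis (no_types, lifting) image_eqI)
qed

lemma block_form:
  assumes card: "card (UNIV :: 'a::{field,finite} set) = 3 ^ (2*m)" and m: "m \<ge> 1"
    and B: "B \<in> (incvec :: 'a set \<Rightarrow> 'a \<Rightarrow> 'a) ` blocks (codeC m)"
  shows "\<exists>c\<in>codeC m. B = (\<lambda>t. (c t)^2)"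
proof -
  obtain c where c: "c \<in> codeC m" "B = incvec {t. c t \<noteq> 0}"
    using B unfolding blocks_def by blast
  have "incvec {t. c t \<noteq> (0::'a)} = (\<lambda>t. (c t)^2)"
    by (rule incvec_sq) (use code_F3[OF card m c(1)] in blast)
  thus ?thesis using c by auto
qed

lemma id1: "(x+1)^2 - (x + -1)^2 = x + 3*(x::'a::field)" by algebra
lemma id2: "x^2 + 3*x = (x+1)^2 + x - (1::'a::field)" by algebra
lemma id3: "a*l + 3*(a*l + k*l) = (a+l+k)^2 - (a-l+k)^2 - k*(l::'a::field)" by algebra
lemma id4: "l*l = (-1)*((x+l+k)^2+(x-l+k)^2) - x^2 + k*x - k*k + 3*(l*l + x*x + k*x + k*(k::'a::field))"
  by algebra
lemma id5: "x*y + 3*(x*y) = (x+y)*(x+y) - (x-y)*(x-(y::'a::field))" by algebra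

lemma decomp:
  assumes card: "card (UNIV :: 'a::{field,finite} set) = 3 ^ (2*m)" and m: "m \<ge> 1"
    and a: "(a::'a) \<in> subF m"
  shows "Tr (2*m) (a * (t + t0)^(3^m+1)) = Tr (2*m) (a * t^(3^m+1)) + Tr (2*m) ((2 * a * t0^(3^m)) * t) + Tr (2*m) (a * t0^(3^m+1))"
    and "Tr (2*m) (a * (t + - t0)^(3^m+1)) = Tr (2*m) (a * t^(3^m+1)) - Tr (2*m) ((2 * a * t0^(3^m)) * t) + Tr (2*m) (a * t0^(3^m+1))"
proof -
  have three: "(3::'a) = 0" by (rule char3[OF card m])
  show "Tr (2*m) (a * (t + t0)^(3^m+1)) = Tr (2*m) (a * t^(3^m+1)) + Tr (2*m) ((2 * a * t0^(3^m)) * t) + Tr (2*m) (a * t0^(3^m+1))"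
    using shift_id[OF card m a, of t t0] by (simp add: Tr_add[OF three])
  have n1: "(- t0) ^ (3^m) = - (t0 ^ (3^m))" by (rule frob_neg[OF three])
  have n2: "(- t0) ^ (3^m+1) = t0 ^ (3^m+1)" by (simp add: n1 power_add)
  have "Tr (2*m) (a * (t + - t0)^(3^m+1)) = Tr (2*m) (a * t^(3^m+1) + (2 * a * (-t0)^(3^m)) * t) + Tr (2*m) (a * (-t0)^(3^m+1))"
    by (rule shift_id[OF card m a])
  also have "Tr (2*m) (a * t^(3^m+1) + (2 * a * (-t0)^(3^m)) * t) = Tr (2*m) (a * t^(3^m+1)) + Tr (2*m) ((2 * a * (-t0)^(3^m)) * t)"
    by (rule Tr_add[OF three])
  also have "Tr (2*m) ((2 * a * (-t0)^(3^m)) * t) = - Tr (2*m) ((2 * a * t0^(3^m)) * t)"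
    unfolding n1 using Tr_neg[OF three] by (metis mult_minus_left mult_minus_right)
  finally show "Tr (2*m) (a * (t + - t0)^(3^m+1)) = Tr (2*m) (a * t^(3^m+1)) - Tr (2*m) ((2 * a * t0^(3^m)) * t) + Tr (2*m) (a * t0^(3^m+1))"
    unfolding n2 by simp
qed

lemma sq_expand: "(a + l + h)^2 = a*a + l*l + h^2*1 + 2*(a*l) + (2*h)*a + (2*h)*(l::'a::field)"
  by algebra

theorem lemma3p10:
  fixes m :: nat
  assumes "m \<ge> 2"
    and "card (UNIV :: 'a::{field,finite} set) = 3 ^ (2*m)"
  shows "span3 ((incvec :: 'a set \<Rightarrow> 'a \<Rightarrow> 'a) ` blocks (codeC m :: ('a \<Rightarrow> 'a) set))
         = span3 (gens m :: ('a \<Rightarrow> 'a) set)"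
proof -
  have m: "m \<ge> 1" using assms(1) by simp
  note card = assms(2)
  have three: "(3::'a) = 0" by (rule char3[OF card m])
  have fer: "(x::'a) ^ (3^(2*m)) = x" for x using fermat[of x] card by simp
  have two0: "(2::'a) \<noteq> 0" using F3_two[OF three] by (metis neg_0_equal_iff_equal zero_neq_one)
  have F3_2: "(2::'a) \<in> F3" by (subst F3_two[OF three]) simp
  define A where "A c t = Tr (2*m) (c * t^(3^m+1))" for c t :: 'a
  define L where "L b t = Tr (2*m) (b * t)" for b t :: 'a
  define X where "X c t0 t = Tr (2*m) (c * (t + t0)^(3^m+1))" for c t0 t :: 'a
  define K where "K c t0 = Tr (2*m) (c * t0^(3^m+1))" for c t0 :: 'a
  have KF3: "K c t0 \<in> F3" for c t0 unfolding K_def by (rule Tr_F3[OF three fer])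
  have AF3: "A c t \<in> F3" for c t unfolding A_def by (rule Tr_F3[OF three fer])
  have LF3: "L c t \<in> F3" for c t unfolding L_def by (rule Tr_F3[OF three fer])
  have dp: "X a t0 t = A a t + L (2 * a * t0^(3^m)) t + K a t0" if "a \<in> subF m" for a t0 t
    unfolding X_def A_def L_def K_def by (rule decomp(1)[OF card m that])
  have dm: "X a (-t0) t = A a t - L (2 * a * t0^(3^m)) t + K a t0" if "a \<in> subF m" for a t0 t
    unfolding X_def A_def L_def K_def by (rule decomp(2)[OF card m that])
  have X0: "X a 0 t = A a t" for a t unfolding X_def A_def by simp
  have solve: "2 * a * ((b / (2 * a)) ^ (3^m)) ^ (3^m) = b" if "a \<noteq> 0" for a b :: 'a
  proof -
    have "((b / (2 * a)) ^ (3^m)) ^ (3^m) = b / (2 * a)" unfolding power_mult[symmetric] by (rule pow_qq[OF card])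
    thus ?thesis using that two0 by simp
  qed

  have P1: "(incvec :: 'a set \<Rightarrow> 'a \<Rightarrow> 'a) ` blocks (codeC m :: ('a \<Rightarrow> 'a) set) \<subseteq> span3 (gens m)"
  proof
    fix B assume "B \<in> (incvec :: 'a set \<Rightarrow> 'a \<Rightarrow> 'a) ` blocks (codeC m :: ('a \<Rightarrow> 'a) set)"
    then obtain c where c: "c \<in> codeC m" "B = (\<lambda>t. (c t)^2)" using block_form[OF card m] by blast
    then obtain a b h where ceq: "c = (\<lambda>t. Tr (2*m) (a * t^(3^m+1) + b*t) + h)" and a: "a \<in> subF m" and h: "h \<in> F3"
      unfolding codeC_def by blast
    have gAA: "(\<lambda>t. A a t * A a t) \<in> span3 (gens m)"
    proof (cases "a = 0")
      case True thus ?thesis unfolding A_def using span3_zero by simp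
    next
      case False
      hence "(\<lambda>t. A a t * A a t) \<in> gens m" unfolding gens_def A_def using a by blast
      thus ?thesis by (rule span3_base)
    qed
    have gAL: "(\<lambda>t. A a t * L b t) \<in> span3 (gens m)"
    proof (cases "a = 0")
      case True thus ?thesis unfolding A_def using span3_zero by simp
    next
      case False
      hence "(\<lambda>t. A a t * L b t) \<in> gens m" unfolding gens_def A_def L_def using a by blast
      thus ?thesis by (rule span3_base)
    qed
    have gA: "(\<lambda>t. A a t) \<in> span3 (gens m)"
    proof (cases "a = 0")
      case True thus ?thesis unfolding A_def using span3_zero by simp
    next
      case False
      hence "(\<lambda>t. A a t) \<in> gens m" unfolding gens_def A_def using a by blast
      thus ?thesis by (rule span3_base)
    qed
    have gLL: "(\<lambda>t. L b t * L b t) \<in> span3 (gens m)"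
      by (rule span3_base) (unfold gens_def L_def, blast)
    have gL: "(\<lambda>t. L b t) \<in> span3 (gens m)"
      by (rule span3_base) (unfold gens_def L_def, blast)
    have g1: "(\<lambda>t. 1) \<in> span3 (gens m)"
      by (rule span3_base) (unfold gens_def, blast)
    have hh: "h^2 \<in> F3" using F3_mult[OF h h] by (simp add: power2_eq_square)
    have h2: "2 * h \<in> F3" using F3_mult[OF F3_2 h] .
    have s1: "(\<lambda>t. A a t * A a t + L b t * L b t) \<in> span3 (gens m)" by (rule span3_add[OF gAA gLL])
    have s2: "(\<lambda>t. A a t * A a t + L b t * L b t + h^2 * 1) \<in> span3 (gens m)"
      by (rule span3_add[OF s1 span3_smult[OF hh g1]])
    have s3: "(\<lambda>t. A a t * A a t + L b t * L b t + h^2 * 1 + 2 * (A a t * L b t)) \<in> span3 (gens m)"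
      by (rule span3_add[OF s2 span3_smult[OF F3_2 gAL]])
    have s4: "(\<lambda>t. A a t * A a t + L b t * L b t + h^2 * 1 + 2 * (A a t * L b t) + (2 * h) * A a t) \<in> span3 (gens m)"
      by (rule span3_add[OF s3 span3_smult[OF h2 gA]])
    have s5: "(\<lambda>t. A a t * A a t + L b t * L b t + h^2 * 1 + 2 * (A a t * L b t) + (2 * h) * A a t + (2 * h) * L b t) \<in> span3 (gens m)"
      by (rule span3_add[OF s4 span3_smult[OF h2 gL]])
    have "B = (\<lambda>t. A a t * A a t + L b t * L b t + h^2 * 1 + 2 * (A a t * L b t) + (2 * h) * A a t + (2 * h) * L b t)"
      unfolding c(2) ceq A_def L_def by (rule ext) (simp only: Tr_add[OF three] sq_expand)
    thus "B \<in> span3 (gens m)" using s5 by simp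
  qed

  define BB where "BB = ((incvec :: 'a set \<Rightarrow> 'a \<Rightarrow> 'a) ` blocks (codeC m :: ('a \<Rightarrow> 'a) set))"
  have SQ1: "(\<lambda>t. (X a t0 t + v)^2) \<in> span3 BB" if "a \<in> subF m" "a \<noteq> 0" "v \<in> F3" "v \<noteq> 0" for a t0 v
    unfolding BB_def X_def by (rule span3_base, rule block_sq[OF card m that])
  have DX: "(\<lambda>t. X a t0 t) \<in> span3 BB" if "a \<in> subF m" "a \<noteq> 0" for a t0
  proof -
    have "(\<lambda>t. (X a t0 t + 1)^2 - (X a t0 t + -1)^2) \<in> span3 BB"
      by (rule span3_diff[OF SQ1 SQ1]) (use that in auto)
    moreover have "(\<lambda>t. (X a t0 t + 1)^2 - (X a t0 t + -1)^2) = (\<lambda>t. X a t0 t)"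
      by (rule ext, subst id1) (simp add: three)
    ultimately show ?thesis by simp
  qed
  have one_in: "(1::'a) \<in> subF m" "(1::'a) \<noteq> 0" by simp_all
  obtain t1 where Kt1: "K 1 t1 = 1"
  proof -
    have "card {t::'a. Tr (2*m) (1 * t^(3^m+1)) = 1} = (3^m+1)*3^(m-1)"
      using count_Q[OF card m one_in F3_1] by simp
    hence "{t::'a. Tr (2*m) (1 * t^(3^m+1)) = 1} \<noteq> {}" by (metis card.empty mult_is_0 zero_less_power
          add_gr_0 zero_less_one less_numeral_extra(3) zero_less_numeral)
    then obtain t where "Tr (2*m) (1 * t^(3^m+1)) = (1::'a)" by blast
    thus ?thesis using that unfolding K_def by blast
  qed
  have One: "(\<lambda>t. 1) \<in> span3 BB"
  proof -
    have "(\<lambda>t. (-1) * (X 1 t1 t + X 1 (-t1) t - X 1 0 t - X 1 0 t)) \<in> span3 BB"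
      by (intro span3_smult F3_m1 span3_diff span3_add DX one_in)
    moreover have "(\<lambda>t. (-1) * (X 1 t1 t + X 1 (-t1) t - X 1 0 t - X 1 0 t)) = (\<lambda>t. 1)"
    proof (rule ext)
      fix t
      have "(-1) * (X 1 t1 t + X 1 (-t1) t - X 1 0 t - X 1 0 t) = (-1) * (2 * K 1 t1)"
        unfolding X0 unfolding dm[OF one_in(1)] unfolding dp[OF one_in(1)] by (simp add: algebra_simps)
      also have "\<dots> = 1 - 3" unfolding Kt1 by simp
      finally show "(-1) * (X 1 t1 t + X 1 (-t1) t - X 1 0 t - X 1 0 t) = 1" using three by simp
    qed
    ultimately show ?thesis by simp
  qed
  have Lin: "(\<lambda>t. L b t) \<in> span3 BB" for b
  proof -
    define t0 where "t0 = (b / (2 * 1)) ^ (3^m)"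
    have b: "2 * 1 * t0^(3^m) = b" unfolding t0_def by (rule solve) simp
    have "(\<lambda>t. X 1 t0 t - X 1 0 t - K 1 t0 * 1) \<in> span3 BB"
      by (intro span3_diff span3_smult KF3 One DX one_in)
    moreover have "(\<lambda>t. X 1 t0 t - X 1 0 t - K 1 t0 * 1) = (\<lambda>t. L b t)"
      by (rule ext) (unfold X0, unfold dp[OF one_in(1)] b, simp)
    ultimately show ?thesis by simp
  qed
  have SqX: "(\<lambda>t. (X a t0 t)^2) \<in> span3 BB" if "a \<in> subF m" "a \<noteq> 0" for a t0
  proof -
    have "(\<lambda>t. (X a t0 t + 1)^2 + X a t0 t - 1) \<in> span3 BB"
      by (intro span3_diff span3_add SQ1 DX One that) auto
    moreover have "(\<lambda>t. (X a t0 t + 1)^2 + X a t0 t - 1) = (\<lambda>t. (X a t0 t)^2)"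
      by (rule ext, subst id2[symmetric]) (simp add: three)
    ultimately show ?thesis by simp
  qed
  have AL: "(\<lambda>t. A a t * L b t) \<in> span3 BB" if "a \<in> subF m" "a \<noteq> 0" for a b
  proof -
    define t0 where "t0 = (b / (2 * a)) ^ (3^m)"
    have b: "2 * a * t0^(3^m) = b" unfolding t0_def by (rule solve) (use that in simp)
    have "(\<lambda>t. (X a t0 t)^2 - (X a (-t0) t)^2 - K a t0 * L b t) \<in> span3 BB"
      by (intro span3_diff span3_smult KF3 Lin SqX that)
    moreover have "(\<lambda>t. (X a t0 t)^2 - (X a (-t0) t)^2 - K a t0 * L b t) = (\<lambda>t. A a t * L b t)"
    proof (rule ext)
      fix t
      show "(X a t0 t)^2 - (X a (-t0) t)^2 - K a t0 * L b t = A a t * L b t"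
        unfolding dm[OF that(1)] unfolding dp[OF that(1)] b using id3[of "A a t" "L b t" "K a t0"] three by simp
    qed
    ultimately show ?thesis by simp
  qed
  have LL: "(\<lambda>t. L b t * L b t) \<in> span3 BB" for b
  proof -
    define t0 where "t0 = (b / (2 * 1)) ^ (3^m)"
    have b: "2 * 1 * t0^(3^m) = b" unfolding t0_def by (rule solve) simp
    have "(\<lambda>t. (-1) * ((X 1 t0 t)^2 + (X 1 (-t0) t)^2) - (X 1 0 t)^2 + K 1 t0 * X 1 0 t - (K 1 t0 * K 1 t0) * 1) \<in> span3 BB"
      by (intro span3_diff span3_add span3_smult F3_m1 KF3 F3_mult SqX DX One one_in)
    moreover have "(\<lambda>t. (-1) * ((X 1 t0 t)^2 + (X 1 (-t0) t)^2) - (X 1 0 t)^2 + K 1 t0 * X 1 0 t - (K 1 t0 * K 1 t0) * 1) = (\<lambda>t. L b t * L b t)"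
    proof (rule ext)
      fix t
      show "(-1) * ((X 1 t0 t)^2 + (X 1 (-t0) t)^2) - (X 1 0 t)^2 + K 1 t0 * X 1 0 t - (K 1 t0 * K 1 t0) * 1 = L b t * L b t"
        unfolding X0 unfolding dm[OF one_in(1)] unfolding dp[OF one_in(1)] b using id4[of "L b t" "A 1 t" "K 1 t0"] three by simp
    qed
    ultimately show ?thesis by simp
  qed
  have LL2: "(\<lambda>t. L b t * L b' t) \<in> span3 BB" for b b'
  proof -
    have "(\<lambda>t. L (b + b') t * L (b + b') t - L (b - b') t * L (b - b') t) \<in> span3 BB"
      by (intro span3_diff LL)
    moreover have "(\<lambda>t. L (b + b') t * L (b + b') t - L (b - b') t * L (b - b') t) = (\<lambda>t. L b t * L b' t)"
    proof (rule ext)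
      fix t
      have e1: "L (b + b') t = L b t + L b' t" unfolding L_def by (simp add: distrib_right Tr_add[OF three])
      have e2: "L (b - b') t = L b t - L b' t" unfolding L_def by (simp add: left_diff_distrib Tr_diff[OF three])
      show "L (b + b') t * L (b + b') t - L (b - b') t * L (b - b') t = L b t * L b' t"
        unfolding e1 e2 using id5[of "L b t" "L b' t"] three by simp
    qed
    ultimately show ?thesis by simp
  qed
  have AA: "(\<lambda>t. A c t * A c t) \<in> span3 BB" if "c \<in> subF m" for c
  proof (cases "c = 0")
    case True thus ?thesis unfolding A_def BB_def using span3_zero by simp
  next
    case False
    have "(\<lambda>t. (X c 0 t)^2) \<in> span3 BB" by (rule SqX[OF that False])
    thus ?thesis unfolding X0 by (simp add: power2_eq_square)
  qed
  have AA2: "(\<lambda>t. A a t * A a' t) \<in> span3 BB" if "a \<in> subF m" "a' \<in> subF m" for a a'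
  proof -
    have "(\<lambda>t. A (a + a') t * A (a + a') t - A (a - a') t * A (a - a') t) \<in> span3 BB"
      by (intro span3_diff AA subF_add[OF three] subF_diff[OF three] that)
    moreover have "(\<lambda>t. A (a + a') t * A (a + a') t - A (a - a') t * A (a - a') t) = (\<lambda>t. A a t * A a' t)"
    proof (rule ext)
      fix t
      have e1: "A (a + a') t = A a t + A a' t" unfolding A_def by (simp add: distrib_right Tr_add[OF three])
      have e2: "A (a - a') t = A a t - A a' t" unfolding A_def by (simp add: left_diff_distrib Tr_diff[OF three])
      show "A (a + a') t * A (a + a') t - A (a - a') t * A (a - a') t = A a t * A a' t"
        unfolding e1 e2 using id5[of "A a t" "A a' t"] three by simp
    qed
    ultimately show ?thesis by simp
  qed
  have AX: "(\<lambda>t. A a t) \<in> span3 BB" if "a \<in> subF m" "a \<noteq> 0" for a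
    using DX[OF that, of 0] unfolding X0 .
  have P2: "gens m \<subseteq> span3 BB"
  proof
    fix g assume "g \<in> (gens m :: ('a \<Rightarrow> 'a) set)"
    thus "g \<in> span3 BB" unfolding gens_def
      using LL2[unfolded L_def] Lin[unfolded L_def] AL[unfolded A_def L_def] AA2[unfolded A_def]
        AX[unfolded A_def] One by blast
  qed
  show ?thesis using span3_eqI[OF P1 P2[unfolded BB_def]] .
qed

end
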